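(* Assume $\phi$ is $\alpha$-Lipschitz for some $0<\alpha<\infty$, $h$ is locally integrable and locally bounded, and $\alpha\int_0^T|h(t)|dt<1$. Then for every $\delta>0$, $$\limsup_{M\to\infty}\limsup_{\epsilon\to0}\epsilon\log\mathbb{P}\Big(\sup_{0\le s\le t\le T,\ |t-s|\le 1/M}|Z^\epsilon_t-Z^\epsilon_s|\ge\delta\Big)=-\infty.$$
   Context: Let $\phi:\mathbb{R}\to[0,\infty)$ and $h:[0,\infty)\to\mathbb{R}$, $T>0$ fixed. For $\epsilon>0$, let $N^\epsilon$ be the simple point process on $[0,\infty)$ with empty past, $N^\epsilon_t$ the number of points in $(0,t]$, defined as the unique strong solution of $N^\epsilon_t=\int_0^t\int_0^\infty \mathbf{1}\{z\le \frac1\epsilon\phi(\int_0^{s-}\epsilon h(s-u)dN^\epsilon_u)\}\pi(dz\,ds)$, where $\pi$ is a Poisson random measure on $[0,\infty)^2$ with intensity $dz\,ds$. Set $Z^\epsilon_t:=\epsilon N^\epsilon_t$. *)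

theory Defs
  imports "HOL-Probability.Probability"
begin

definition elog :: "real \<Rightarrow> ereal" where
  "elog p = (if 0 < p then ereal (ln p) else -\<infinity>)"

text \<open>Poisson random measure on [0,inf)^2 with intensity dz ds (Lebesgue measure),
  represented by its random set of atoms (simple point process).\<close>
definition poisson_random_measure :: "'w measure \<Rightarrow> ('w \<Rightarrow> (real \<times> real) set) \<Rightarrow> bool" where
  "poisson_random_measure M Pts \<longleftrightarrow>
     prob_space M \<and>
     (\<forall>\<omega>\<in>space M. Pts \<omega> \<subseteq> {0..} \<times> {0..}) \<and>
     (\<forall>A. A \<in> sets lborel \<and> A \<subseteq> {0..} \<times> {0..} \<and> emeasure lborel A < \<infinity> \<longrightarrow>
         (AE \<omega> in M. finite (Pts \<omega> \<inter> A)) \<and>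
         (\<forall>k::nat. {\<omega>\<in>space M. card (Pts \<omega> \<inter> A) = k} \<in> sets M \<and>
            measure M {\<omega>\<in>space M. card (Pts \<omega> \<inter> A) = k}
              = exp (- measure lborel A) * measure lborel A ^ k / fact k)) \<and>
     (\<forall>(I::nat set) A. finite I \<and> disjoint_family_on A I \<and>
         (\<forall>i\<in>I. A i \<in> sets lborel \<and> A i \<subseteq> {0..} \<times> {0..} \<and> emeasure lborel (A i) < \<infinity>) \<longrightarrow>
         prob_space.indep_vars M (\<lambda>_. count_space UNIV) (\<lambda>i \<omega>. card (Pts \<omega> \<inter> A i)) I)"

text \<open>N (a path-valued random variable, N \<omega> t = number of points in (0,t]) solves the
  thinning equation N_t = \<integral>_0^t \<integral>_0^\<infinity> 1{z \<le> (1/\<epsilon>) \<phi>(\<integral>_0^{s-} \<epsilon> h(s-u) dN_u)} \<pi>(dz ds),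
  almost surely, for all t (for t \<le> 0 this forces N_t = 0: empty past).
  The integral against dN is the Lebesgue-Stieltjes integral over (0,s).\<close>
definition hawkes_solution ::
  "'w measure \<Rightarrow> ('w \<Rightarrow> (real \<times> real) set) \<Rightarrow> (real \<Rightarrow> real) \<Rightarrow> (real \<Rightarrow> real) \<Rightarrow> real
     \<Rightarrow> ('w \<Rightarrow> real \<Rightarrow> nat) \<Rightarrow> bool" where
  "hawkes_solution M Pts \<phi> h \<epsilon> N \<longleftrightarrow>
     (AE \<omega> in M. \<forall>t::real. N \<omega> t =
        card {(z, s). (z, s) \<in> Pts \<omega> \<and> 0 < s \<and> s \<le> t \<and>
          z \<le> (1 / \<epsilon>) * \<phi> (LINT u:{0<..<s}|interval_measure (\<lambda>v. real (N \<omega> v)). \<epsilon> * h (s - u))})"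

end

theory Submission
  imports Defs
begin

lemma exp_taylor_tail:
  fixes mu :: real assumes "0 \<le> mu"
  shows "1 - exp (-mu) * (\<Sum>j<k. mu ^ j / fact j) \<le> mu ^ k / fact k"
proof -
  obtain t where t: "\<bar>t\<bar> \<le> \<bar>mu\<bar>" "exp mu = (\<Sum>m<k. (mu ^ m) / fact m) + (exp t / fact k) * mu ^ k"
    using Maclaurin_exp_le by blast
  have "exp t \<le> exp mu" using t(1) assms by simp
  have "1 - exp (-mu) * (\<Sum>j<k. mu ^ j / fact j) = exp (-mu) * (exp mu - (\<Sum>j<k. mu ^ j / fact j))"
    by (simp add: algebra_simps exp_minus field_simps)
  also have "\<dots> = exp (-mu) * ((exp t / fact k) * mu ^ k)" using t(2) by simp
  also have "\<dots> \<le> exp (-mu) * ((exp mu / fact k) * mu ^ k)"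
    using \<open>exp t \<le> exp mu\<close> assms by (intro mult_left_mono mult_right_mono divide_right_mono) auto
  also have "\<dots> = mu ^ k / fact k" by (simp add: exp_minus field_simps)
  finally show ?thesis .
qed

lemma pow_div_fact_le_exp:
  fixes x :: real assumes "0 \<le> x"
  shows "x ^ k / fact k \<le> exp x"
proof -
  obtain t where t: "\<bar>t\<bar> \<le> \<bar>x\<bar>" "exp x = (\<Sum>m<Suc k. (x ^ m) / fact m) + (exp t / fact (Suc k)) * x ^ Suc k"
    using Maclaurin_exp_le by blast
  have "x ^ k / fact k \<le> (\<Sum>m<Suc k. (x ^ m) / fact m)"
    using assms by (intro member_le_sum) auto
  also have "\<dots> \<le> exp x" using t(2) assms by simp
  finally show ?thesis .
qed

lemma poisson_tail:
  assumes PRM: "poisson_random_measure M Pts"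
    and A: "A \<in> sets lborel" "A \<subseteq> {0..} \<times> {0..}" "emeasure lborel A < \<infinity>"
  shows "{\<omega>\<in>space M. k \<le> card (Pts \<omega> \<inter> A)} \<in> sets M"
    and "measure M {\<omega>\<in>space M. k \<le> card (Pts \<omega> \<inter> A)} \<le> measure lborel A ^ k / fact k"
proof -
  interpret prob_space M using PRM unfolding poisson_random_measure_def by blast
  let ?mu = "measure lborel A"
  define E where "E j = {\<omega>\<in>space M. card (Pts \<omega> \<inter> A) = j}" for j
  have Em: "E j \<in> sets M" and Ep: "prob (E j) = exp (- ?mu) * ?mu ^ j / fact j" for j
    using PRM A unfolding poisson_random_measure_def E_def by blast+
  have eq: "{\<omega>\<in>space M. k \<le> card (Pts \<omega> \<inter> A)} = space M - (\<Union>j\<in>{..<k}. E j)"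
    unfolding E_def by auto
  show "{\<omega>\<in>space M. k \<le> card (Pts \<omega> \<inter> A)} \<in> sets M" unfolding eq using Em by auto
  have disj: "disjoint_family_on E {..<k}" unfolding disjoint_family_on_def E_def by auto
  have "prob (\<Union>j\<in>{..<k}. E j) = (\<Sum>j<k. prob (E j))"
    using disj Em by (intro finite_measure_finite_Union) auto
  also have "\<dots> = exp (- ?mu) * (\<Sum>j<k. ?mu ^ j / fact j)"
    by (simp add: Ep sum_distrib_left)
  finally have U: "prob (\<Union>j\<in>{..<k}. E j) = exp (- ?mu) * (\<Sum>j<k. ?mu ^ j / fact j)" .
  have "prob (space M - (\<Union>j\<in>{..<k}. E j)) = 1 - prob (\<Union>j\<in>{..<k}. E j)"
    using Em by (intro prob_compl) auto
  also have "\<dots> \<le> ?mu ^ k / fact k" unfolding U by (rule exp_taylor_tail) simp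
  finally show "measure M {\<omega>\<in>space M. k \<le> card (Pts \<omega> \<inter> A)} \<le> ?mu ^ k / fact k"
    unfolding eq .
qed


lemma interval_measure_nonmono_zero:
  fixes F :: "real \<Rightarrow> real"
  assumes "0 \<le> a" "a \<le> b" "F 0 \<le> F b" "F b < F a"
  shows "emeasure (interval_measure F) X = 0"
proof -
  let ?I = "{(a, b). a \<le> (b::real)}" and ?G = "\<lambda>(a, b). {a<..b::real}"
    and ?mu = "\<lambda>(a, b). ennreal (F b - F a)"
  have noex: "\<not> (\<exists>\<mu>'. (\<forall>i\<in>?I. \<mu>' (?G i) = ?mu i) \<and> measure_space UNIV (sigma_sets UNIV (?G`?I)) \<mu>')"
  proof
    assume "\<exists>\<mu>'. (\<forall>i\<in>?I. \<mu>' (?G i) = ?mu i) \<and> measure_space UNIV (sigma_sets UNIV (?G`?I)) \<mu>'"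
    then obtain \<mu>' where eq: "\<forall>i\<in>?I. \<mu>' (?G i) = ?mu i"
      and ms: "measure_space UNIV (sigma_sets UNIV (?G`?I)) \<mu>'" by blast
    interpret sa: sigma_algebra UNIV "sigma_sets UNIV (?G`?I)"
      using ms unfolding measure_space_def by blast
    have add: "additive (sigma_sets UNIV (?G`?I)) \<mu>'"
      using ms unfolding measure_space_def by (intro sa.countably_additive_additive) auto
    have m1: "{0<..a} \<in> sigma_sets UNIV (?G`?I)"
      using assms by (intro sigma_sets.Basic) (auto intro!: image_eqI[of _ _ "(0, a)"])
    have m2: "{a<..b} \<in> sigma_sets UNIV (?G`?I)"
      using assms by (intro sigma_sets.Basic) (auto intro!: image_eqI[of _ _ "(a, b)"])
    have un: "{0<..b} = {0<..a} \<union> {a<..b}" using assms by auto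
    have "\<mu>' {0<..b} = \<mu>' {0<..a} + \<mu>' {a<..b}"
      unfolding un by (rule additiveD[OF add]) (use m1 m2 in auto)
    moreover have "\<mu>' {0<..b} = ennreal (F b - F 0)" using eq assms by auto
    moreover have "\<mu>' {0<..a} = ennreal (F a - F 0)" using eq assms by auto
    moreover have "\<mu>' {a<..b} = ennreal (F b - F a)" using eq assms by auto
    ultimately have "ennreal (F b - F 0) = ennreal (F a - F 0)"
      using assms by (simp add: ennreal_neg)
    then have "F b - F 0 = F a - F 0" using assms by (subst (asm) ennreal_inj) auto
    then show False using assms by simp
  qed
  have "interval_measure F = measure_of UNIV (?G`?I) (\<lambda>_. 0)"
    unfolding interval_measure_def extend_measure_def using noex by auto
  then show ?thesis by (simp add: emeasure_measure_of_conv)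
qed


lemma set_integral_abs_bound:
  fixes f :: "real \<Rightarrow> real"
  assumes A: "A \<in> sets M" "emeasure M A < \<infinity>" and B: "\<And>x. x \<in> A \<Longrightarrow> \<bar>f x\<bar> \<le> B"
  shows "\<bar>LINT x:A|M. f x\<bar> \<le> B * measure M A"
proof (cases "set_integrable M A f")
  case True
  have B0: "0 \<le> B" if "A \<noteq> {}" using B that by (meson abs_ge_zero all_not_in_conv order_trans)
  have int: "integrable M (\<lambda>x. indicator A x * B)"
    using A by (intro integrable_mult_left) (auto simp: integrable_indicator_iff)
  have "\<bar>LINT x:A|M. f x\<bar> \<le> (LINT x:A|M. \<bar>f x\<bar>)"
    using set_integral_norm_bound[OF True] by simp
  also have "\<dots> = (LINT x|M. indicator A x * \<bar>f x\<bar>)"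
    by (simp add: set_lebesgue_integral_def)
  also have "\<dots> \<le> (LINT x|M. indicator A x * B)"
  proof (rule integral_mono)
    show "integrable M (\<lambda>x. indicator A x * \<bar>f x\<bar>)"
    proof -
      have "integrable M (\<lambda>x. \<bar>indicator A x * f x\<bar>)"
        using integrable_abs[OF True[unfolded set_integrable_def]] by simp
      then show ?thesis by (simp add: abs_mult)
    qed
    show "integrable M (\<lambda>x. indicator A x * B)" by (rule int)
    show "indicator A x * \<bar>f x\<bar> \<le> indicator A x * B" for x
      using B by (auto simp: indicator_def)
  qed
  also have "\<dots> = B * measure M A"
    using A by (simp add: mult.commute)
  finally show ?thesis .
next
  case False
  then have "(LINT x:A|M. f x) = 0"
    unfolding set_lebesgue_integral_def set_integrable_def
    by (simp add: not_integrable_integral_eq)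
  moreover have "0 \<le> B * measure M A" if "A \<noteq> {}"
    using B that by (meson abs_ge_zero all_not_in_conv order_trans measure_nonneg mult_nonneg_nonneg)
  ultimately show ?thesis by (cases "A = {}") auto
qed


definition Sset :: "(real \<times> real) set \<Rightarrow> (real \<Rightarrow> real) \<Rightarrow> real \<Rightarrow> (real \<times> real) set" where
  "Sset P g t = {(z, s). (z, s) \<in> P \<and> 0 < s \<and> s \<le> t \<and> z \<le> g s}"

lemma Sset_mono: "t \<le> t' \<Longrightarrow> Sset P g t \<subseteq> Sset P g t'"
  unfolding Sset_def by auto

lemma integral_zero_measure:
  assumes "\<And>X. emeasure M X = 0" "space M = UNIV"
  shows "(LINT u:A|M. f u) = (0::real)"
proof -
  have "UNIV \<in> null_sets M" using assms sets.top[of M] by (auto simp: null_sets_def)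
  then have "AE x in M. indicator A x *\<^sub>R f x = 0"
    by (intro AE_I'[of UNIV]) auto
  then show ?thesis unfolding set_lebesgue_integral_def by (rule integral_eq_zero_AE)
qed

lemma Sset_finite_if_const:
  assumes quad: "P \<subseteq> {0..} \<times> {0..}"
    and fin: "\<forall>n::nat. finite (P \<inter> ({0..c} \<times> {0<..real n}))"
    and g: "\<And>s. 0 < s \<Longrightarrow> g s = c"
  shows "finite (Sset P g t)"
proof -
  obtain n :: nat where n: "t \<le> real n" using real_arch_simple by blast
  have "Sset P g t \<subseteq> P \<inter> ({0..c} \<times> {0<..real n})"
    using quad g n unfolding Sset_def by auto
  then show ?thesis using fin finite_subset by blast
qed

lemma path_struct:
  fixes F :: "real \<Rightarrow> nat" and P :: "(real \<times> real) set" and \<phi> h g :: "real \<Rightarrow> real"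
  assumes g_def: "\<And>s. g s = (1/\<epsilon>) * \<phi> (LINT u:{0<..<s}|interval_measure (\<lambda>v. real (F v)). \<epsilon> * h (s - u))"
    and eq: "\<And>t. F t = card (Sset P g t)"
    and quad: "P \<subseteq> {0..} \<times> {0..}"
    and fin: "\<forall>n::nat. finite (P \<inter> ({0..(1/\<epsilon>) * \<phi> 0} \<times> {0<..real n}))"
  shows "mono F" and "\<And>t. finite (Sset P g t)" and "\<And>t. t \<le> 0 \<Longrightarrow> F t = 0"
proof -
  have neg: "F t = 0" if "t \<le> 0" for t
  proof -
    have "Sset P g t = {}" using that unfolding Sset_def by auto
    then show ?thesis using eq by simp
  qed
  then show "\<And>t. t \<le> 0 \<Longrightarrow> F t = 0" .
  have fin_if_zero: "finite (Sset P g t)"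
    if "\<And>X. emeasure (interval_measure (\<lambda>v. real (F v))) X = 0" for t
  proof (rule Sset_finite_if_const[OF quad fin])
    fix s :: real
    show "g s = (1/\<epsilon>) * \<phi> 0" unfolding g_def
      by (subst integral_zero_measure[OF that]) auto
  qed
  show mono: "mono F"
  proof (rule ccontr)
    assume "\<not> mono F"
    then obtain a b where ab: "a \<le> b" "F b < F a" unfolding mono_def by (auto simp: not_le)
    have "0 < a" using ab neg by (metis not_less0 not_le)
    have z: "emeasure (interval_measure (\<lambda>v. real (F v))) X = 0" for X
      using ab \<open>0 < a\<close> neg[of 0] by (intro interval_measure_nonmono_zero[of a b]) auto
    have "F a \<le> F b" unfolding eq
      using fin_if_zero[OF z] Sset_mono[OF ab(1)] by (intro card_mono) auto
    then show False using ab by simp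
  qed
  show "finite (Sset P g t)" for t
  proof (rule ccontr)
    assume inf: "infinite (Sset P g t)"
    have F0: "F v = 0" for v
    proof (cases "t \<le> v")
      case True
      then have "infinite (Sset P g v)" using inf Sset_mono finite_subset by metis
      then show ?thesis using eq by simp
    next
      case False
      then have "F v \<le> F t" using mono by (simp add: mono_def)
      also have "F t = 0" using eq inf by simp
      finally show ?thesis by simp
    qed
    have "interval_measure (\<lambda>v. real (F v)) = interval_measure (\<lambda>v. 0)"
      using F0 by simp
    then have "emeasure (interval_measure (\<lambda>v. real (F v))) X = 0" for X
      by (simp add: interval_measure_def extend_measure_def emeasure_measure_of_conv)
    then show False using fin_if_zero inf by blast
  qed
qed


lemma loc_const_F:
  fixes F :: "real \<Rightarrow> nat"
  assumes mono: "mono F" and eq: "\<And>t. F t = card (Sset P g t)"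
    and fin: "\<And>t. finite (Sset P g t)"
  shows "\<exists>d>0. \<forall>v. a < v \<and> v < a + d \<longrightarrow> F v = F a"
proof -
  define D where "D = Sset P g (a + 1)"
  define Ts where "Ts = {s. \<exists>z. (z, s) \<in> D \<and> a < s}"
  have "Ts \<subseteq> snd ` D" unfolding Ts_def by force
  then have finTs: "finite Ts" using fin[of "a+1"] D_def finite_surj by blast
  define d where "d = (if Ts = {} then 1 else min 1 (Min Ts - a))"
  have d0: "0 < d" using finTs unfolding d_def by (auto simp: Ts_def)
  have dle: "a + d \<le> s" if "s \<in> Ts" for s
  proof -
    have "Min Ts \<le> s" using Min_le[OF finTs that] .
    then show ?thesis using that unfolding d_def by auto
  qed
  have d1: "d \<le> 1" unfolding d_def by auto
  have same: "F v = F a" if "a < v" "v < a + d" for v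
  proof -
    have "Sset P g v = Sset P g a"
    proof
      show "Sset P g a \<subseteq> Sset P g v" using Sset_mono that by simp
      show "Sset P g v \<subseteq> Sset P g a"
      proof
        fix x assume x: "x \<in> Sset P g v"
        obtain z s where zs: "x = (z, s)" by force
        have "x \<in> D" using x that d1 unfolding D_def Sset_def zs by auto
        show "x \<in> Sset P g a"
        proof (rule ccontr)
          assume "x \<notin> Sset P g a"
          then have "a < s" using x unfolding Sset_def zs by auto
          then have "s \<in> Ts" using \<open>x \<in> D\<close> zs unfolding Ts_def by auto
          then have "a + d \<le> s" by (rule dle)
          moreover have "s \<le> v" using x unfolding Sset_def zs by auto
          ultimately show False using that by simp
        qed
      qed
    qed
    then show ?thesis using eq by simp
  qed
  then show ?thesis using d0 by blast
qed

lemma right_cont_F: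
  fixes F :: "real \<Rightarrow> nat"
  assumes mono: "mono F" and eq: "\<And>t. F t = card (Sset P g t)"
    and fin: "\<And>t. finite (Sset P g t)"
  shows "continuous (at_right a) (\<lambda>v. real (F v))"
proof -
  obtain d where d0: "d > 0" and same: "\<And>v. a < v \<Longrightarrow> v < a + d \<Longrightarrow> F v = F a"
    using loc_const_F[OF assms, of a] by blast
  have "eventually (\<lambda>v. real (F v) = real (F a)) (at_right a)"
    unfolding eventually_at_right_field using d0 same by (intro exI[of _ "a+d"]) auto
  then have "((\<lambda>v. real (F v)) \<longlongrightarrow> real (F a)) (at_right a)"
    by (rule tendsto_eventually)
  then show ?thesis by (simp add: continuous_within)
qed

lemma count_bound:
  fixes F :: "real \<Rightarrow> nat"
  assumes eq: "\<And>t. F t = card (Sset P g t)"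
    and fin: "finite (Sset P g b)" and ab: "a \<le> b"
    and gb: "\<And>s. a < s \<Longrightarrow> s \<le> b \<Longrightarrow> g s \<le> L"
    and quad: "P \<subseteq> {0..} \<times> {0..}"
    and finR: "finite (P \<inter> ({0..L} \<times> {a<..b}))"
  shows "F b \<le> F a + card (P \<inter> ({0..L} \<times> {a<..b}))"
proof -
  define D where "D = {x \<in> Sset P g b. a < snd x}"
  have un: "Sset P g b = Sset P g a \<union> D" using ab unfolding D_def Sset_def by auto
  have dis: "Sset P g a \<inter> D = {}" unfolding D_def Sset_def by auto
  have finA: "finite (Sset P g a)" using fin Sset_mono[OF ab] finite_subset by blast
  have finD: "finite D" using fin unfolding D_def by auto
  have "D \<subseteq> P \<inter> ({0..L} \<times> {a<..b})"
    using quad gb unfolding D_def Sset_def by fastforce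
  then have "card D \<le> card (P \<inter> ({0..L} \<times> {a<..b}))" using finR by (rule card_mono[rotated])
  moreover have "F b = F a + card D" using eq un dis finA finD by (simp add: card_Un_disjoint)
  ultimately show ?thesis by simp
qed

lemma emeasure_Ioo_bound:
  fixes F :: "real \<Rightarrow> real"
  assumes mono: "\<And>x y. x \<le> y \<Longrightarrow> F x \<le> F y" and rc: "\<And>a. continuous (at_right a) F"
    and F0: "0 \<le> F 0" and s: "0 < s" and c: "\<And>v. v < s \<Longrightarrow> F v \<le> c"
  shows "emeasure (interval_measure F) {0<..<s} \<le> ennreal c"
proof -
  define A where "A n = {0<..s - s / real (Suc n)}" for n
  have incA: "incseq A" unfolding A_def incseq_def
  proof (intro allI impI subsetI)
    fix m n x assume "m \<le> n" "x \<in> {0<..s - s / real (Suc m)}"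
    moreover have "s / real (Suc n) \<le> s / real (Suc m)"
      using \<open>m \<le> n\<close> s by (intro divide_left_mono) auto
    ultimately show "x \<in> {0<..s - s / real (Suc n)}" by auto
  qed
  have UA: "(\<Union>n. A n) = {0<..<s}"
  proof
    show "(\<Union>n. A n) \<subseteq> {0<..<s}"
    proof
      fix x assume "x \<in> (\<Union>n. A n)"
      then obtain n where x: "0 < x" "x \<le> s - s / real (Suc n)" unfolding A_def by auto
      have "s / real (Suc n) > 0" using s by simp
      then show "x \<in> {0<..<s}" using x by auto
    qed
    show "{0<..<s} \<subseteq> (\<Union>n. A n)"
    proof
      fix x assume x: "x \<in> {0<..<s}"
      obtain n :: nat where n: "s / (s - x) < real n" using reals_Archimedean2 by blast
      have "s - x > 0" using x by simp
      then have "s < real n * (s - x)" using n by (simp add: field_simps)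
      then have "s / real (Suc n) \<le> s - x" using s \<open>s - x > 0\<close>
        by (simp add: field_simps)
      then have "x \<in> A n" using x unfolding A_def by auto
      then show "x \<in> (\<Union>n. A n)" by blast
    qed
  qed
  have "emeasure (interval_measure F) {0<..<s} = (SUP n. emeasure (interval_measure F) (A n))"
    unfolding UA[symmetric] by (rule SUP_emeasure_incseq[symmetric, OF _ incA]) (auto simp: A_def)
  also have "\<dots> \<le> ennreal c"
  proof (rule SUP_least)
    fix n
    show "emeasure (interval_measure F) (A n) \<le> ennreal c"
    proof (cases "0 \<le> s - s / real (Suc n)")
      case True
      then have "emeasure (interval_measure F) (A n) = ennreal (F (s - s / real (Suc n)) - F 0)"
        unfolding A_def by (intro emeasure_interval_measure_Ioc) (auto intro: mono rc)
      also have "\<dots> \<le> ennreal c" using F0 c[of "s - s / real (Suc n)"] s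
        by (intro ennreal_leI) auto
      finally show ?thesis .
    next
      case False
      then have "A n = {}" unfolding A_def by auto
      then show ?thesis by simp
    qed
  qed
  finally show ?thesis .
qed

lemma lipschitz_bound:
  assumes "\<alpha>-lipschitz_on UNIV \<phi>"
  shows "\<phi> x \<le> \<phi> 0 + \<alpha> * \<bar>x\<bar>"
proof -
  have "dist (\<phi> x) (\<phi> 0) \<le> \<alpha> * dist x 0" using lipschitz_onD[OF assms, of x 0] by simp
  then show ?thesis by (simp add: dist_real_def)
qed

lemma intensity_bound:
  fixes F :: "real \<Rightarrow> nat" and \<phi> h g :: "real \<Rightarrow> real"
  assumes g_def: "\<And>s. g s = (1/\<epsilon>) * \<phi> (LINT u:{0<..<s}|interval_measure (\<lambda>v. real (F v)). \<epsilon> * h (s - u))"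
    and eps: "0 < \<epsilon>"
    and mono: "mono F" and rc: "\<And>a. continuous (at_right a) (\<lambda>v. real (F v))"
    and lip: "\<alpha>-lipschitz_on UNIV \<phi>"
    and hb: "\<And>x. 0 \<le> x \<Longrightarrow> x \<le> T0 \<Longrightarrow> \<bar>h x\<bar> \<le> H"
    and H0: "0 \<le> H"
    and s: "0 < s" "s \<le> T0"
    and c: "\<And>v. v < s \<Longrightarrow> real (F v) \<le> c"
  shows "g s \<le> (\<phi> 0 + \<alpha> * \<epsilon> * H * c) / \<epsilon>"
proof -
  let ?mu = "interval_measure (\<lambda>v. real (F v))"
  have alpha0: "0 \<le> \<alpha>" using lip lipschitz_on_nonneg by blast
  have c0: "0 \<le> c" using c[of 0] s by (smt (verit) of_nat_0_le_iff)
  have em: "emeasure ?mu {0<..<s} \<le> ennreal c"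
    by (rule emeasure_Ioo_bound) (use mono rc s c in \<open>auto simp: mono_def\<close>)
  then have emf: "emeasure ?mu {0<..<s} < \<infinity>" by (simp add: le_less_trans)
  have me: "measure ?mu {0<..<s} \<le> c"
    using em c0 emf by (simp add: measure_def enn2real_leI)
  have "\<bar>LINT u:{0<..<s}|?mu. \<epsilon> * h (s - u)\<bar> \<le> (\<epsilon> * H) * measure ?mu {0<..<s}"
  proof (rule set_integral_abs_bound)
    show "{0<..<s} \<in> sets ?mu" by simp
    show "emeasure ?mu {0<..<s} < \<infinity>" by (rule emf)
    fix u assume "u \<in> {0<..<s}"
    then have "\<bar>h (s - u)\<bar> \<le> H" using s by (intro hb) auto
    then show "\<bar>\<epsilon> * h (s - u)\<bar> \<le> \<epsilon> * H" using eps by (simp add: abs_mult)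
  qed
  also have "\<dots> \<le> (\<epsilon> * H) * c" using me eps H0 by (intro mult_left_mono) auto
  finally have I: "\<bar>LINT u:{0<..<s}|?mu. \<epsilon> * h (s - u)\<bar> \<le> \<epsilon> * H * c" .
  have "\<phi> (LINT u:{0<..<s}|?mu. \<epsilon> * h (s - u)) \<le> \<phi> 0 + \<alpha> * (\<epsilon> * H * c)"
    using lipschitz_bound[OF lip] I alpha0
    by (meson add_left_mono mult_left_mono order_trans)
  then show ?thesis unfolding g_def using eps by (simp add: field_simps)
qed


lemma step_level:
  fixes F :: "real \<Rightarrow> nat"
  assumes mono: "mono F" and eq: "\<And>t. F t = card (Sset P g t)"
    and fin: "\<And>t. finite (Sset P g t)"
    and ab: "a \<le> b" and Fa: "real (F a) \<le> La"
    and gb: "\<And>s. a < s \<Longrightarrow> s \<le> b \<Longrightarrow> (\<And>v. v < s \<Longrightarrow> real (F v) \<le> Lb) \<Longrightarrow> g s \<le> \<Lambda>"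
    and quad: "P \<subseteq> {0..} \<times> {0..}"
    and finR: "finite (P \<inter> ({0..\<Lambda>} \<times> {a<..b}))"
    and cnt: "La + real (card (P \<inter> ({0..\<Lambda>} \<times> {a<..b}))) \<le> Lb"
  shows "\<And>v. v \<le> b \<Longrightarrow> real (F v) \<le> Lb"
proof (rule ccontr)
  fix v0 assume v0: "v0 \<le> b" "\<not> real (F v0) \<le> Lb"
  define U where "U = {v. v \<le> b \<and> Lb < real (F v)}"
  define u where "u = Inf U"
  have LaLb: "La \<le> Lb" using cnt by simp
  have low: "a < v" if "v \<in> U" for v
  proof (rule ccontr)
    assume "\<not> a < v"
    then have "F v \<le> F a" using mono by (simp add: mono_def)
    then show False using that Fa LaLb unfolding U_def by simp
  qed
  have U0: "v0 \<in> U" using v0 unfolding U_def by simp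
  have bdd: "bdd_below U" using low by (meson bdd_below.I less_imp_le)
  have u_le: "u \<le> v" if "v \<in> U" for v unfolding u_def using cInf_lower[OF that bdd] .
  have a_u: "a \<le> u" unfolding u_def using U0 low by (intro cInf_greatest) (auto intro: less_imp_le)
  have u_b: "u \<le> b" using u_le[OF U0] v0 by simp
  obtain d where d0: "d > 0" and same: "\<And>v. u < v \<Longrightarrow> v < u + d \<Longrightarrow> F v = F u"
    using loc_const_F[OF mono eq fin, of u] by blast
  have uU: "u \<in> U"
  proof -
    obtain w where w: "w \<in> U" "w < u + d"
      using cInf_lessD[of U "u + d"] U0 d0 unfolding u_def by fastforce
    show ?thesis
    proof (cases "w = u")
      case True then show ?thesis using w by simp
    next
      case False
      then have "u < w" using u_le[OF w(1)] by simp
      then have "F w = F u" using same w by simp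
      then show ?thesis using w u_b unfolding U_def by simp
    qed
  qed
  have au: "a < u" using low[OF uU] .
  have below: "real (F v) \<le> Lb" if "v < u" for v
  proof (rule ccontr)
    assume "\<not> real (F v) \<le> Lb"
    then have "v \<in> U" using that u_b unfolding U_def by simp
    then show False using u_le that by force
  qed
  have sub: "P \<inter> ({0..\<Lambda>} \<times> {a<..u}) \<subseteq> P \<inter> ({0..\<Lambda>} \<times> {a<..b})" using u_b by auto
  have finR': "finite (P \<inter> ({0..\<Lambda>} \<times> {a<..u}))" using finite_subset[OF sub finR] .
  have "F u \<le> F a + card (P \<inter> ({0..\<Lambda>} \<times> {a<..u}))"
  proof (rule count_bound[OF eq fin[of u] less_imp_le[OF au] _ quad finR'])
    fix s assume "a < s" "s \<le> u"
    then show "g s \<le> \<Lambda>" using u_b below by (intro gb) auto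
  qed
  also have "\<dots> \<le> F a + card (P \<inter> ({0..\<Lambda>} \<times> {a<..b}))"
    using card_mono[OF finR sub] by simp
  finally have "real (F u) \<le> La + real (card (P \<inter> ({0..\<Lambda>} \<times> {a<..b})))"
    using Fa by (smt (verit) of_nat_add of_nat_le_iff)
  then have "real (F u) \<le> Lb" using cnt by simp
  then show False using uU unfolding U_def by simp
qed


lemma eps_elog_bound:
  fixes p Q r \<epsilon> :: real
  assumes Q: "1 \<le> Q" and r: "0 < r" and eps: "0 < \<epsilon>" "\<epsilon> < r / (2 * ln Q + 1)"
    and p: "p \<le> Q * exp (- r / \<epsilon>)"
  shows "ereal \<epsilon> * elog p \<le> ereal (- r / 2)"
proof (cases "0 < p")
  case False then show ?thesis using eps by (simp add: elog_def)
next
  case True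
  have lnQ: "0 \<le> ln Q" using Q by simp
  have "ln p \<le> ln (Q * exp (- r / \<epsilon>))" using True p by simp
  also have "\<dots> = ln Q - r / \<epsilon>" using Q by (simp add: ln_mult)
  finally have lq: "ln p \<le> ln Q - r / \<epsilon>" .
  have "\<epsilon> * ln p \<le> \<epsilon> * (ln Q - r / \<epsilon>)" using lq eps by (intro mult_left_mono) auto
  also have "\<epsilon> * (ln Q - r / \<epsilon>) = \<epsilon> * ln Q - r" using eps by (simp add: right_diff_distrib)
  finally have lp: "\<epsilon> * ln p \<le> \<epsilon> * ln Q - r" .
  have "\<epsilon> * (2 * ln Q + 1) < r" using eps(2) lnQ eps(1) by (simp add: pos_less_divide_eq add_nonneg_pos mult.commute)
  then have "2 * (\<epsilon> * ln Q) + \<epsilon> < r" by (simp add: algebra_simps)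
  then have "\<epsilon> * ln Q \<le> r / 2" using eps by linarith
  then have "\<epsilon> * ln p \<le> - r / 2" using lp by simp
  then show ?thesis using True by (simp add: elog_def)
qed

lemma final_asymp:
  fixes P :: "real \<Rightarrow> real \<Rightarrow> real"
  assumes key: "\<And>r. 0 < r \<Longrightarrow> \<exists>m0. \<forall>m\<ge>m0. \<exists>Q\<ge>1. \<exists>e0>0. \<forall>\<epsilon>. 0 < \<epsilon> \<and> \<epsilon> < e0 \<longrightarrow> P m \<epsilon> \<le> Q * exp (- r / \<epsilon>)"
  shows "Limsup at_top (\<lambda>m. Limsup (at_right (0::real)) (\<lambda>\<epsilon>. ereal \<epsilon> * elog (P m \<epsilon>))) = -\<infinity>"
proof (rule ereal_bot)
  fix B :: real
  define r where "r = 2 * (\<bar>B\<bar> + 1)"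
  have r0: "0 < r" unfolding r_def by simp
  obtain m0 where m0: "\<forall>m\<ge>m0. \<exists>Q\<ge>1. \<exists>e0>0. \<forall>\<epsilon>. 0 < \<epsilon> \<and> \<epsilon> < e0 \<longrightarrow> P m \<epsilon> \<le> Q * exp (- r / \<epsilon>)"
    using key[OF r0] by (elim exE) (rule that)
  have inner: "Limsup (at_right (0::real)) (\<lambda>\<epsilon>. ereal \<epsilon> * elog (P m \<epsilon>)) \<le> ereal (- r / 2)"
    if mm: "m \<ge> m0" for m
  proof -
    have ex: "\<exists>Q\<ge>1. \<exists>e0>0. \<forall>\<epsilon>. 0 < \<epsilon> \<and> \<epsilon> < e0 \<longrightarrow> P m \<epsilon> \<le> Q * exp (- r / \<epsilon>)"
      using m0 mm by simp
    obtain Q e0 where Q: "Q \<ge> 1" "e0 > 0" and b: "\<forall>\<epsilon>. 0 < \<epsilon> \<and> \<epsilon> < e0 \<longrightarrow> P m \<epsilon> \<le> Q * exp (- r / \<epsilon>)"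
      using ex by auto
    define e1 where "e1 = min e0 (r / (2 * ln Q + 1))"
    have "0 < r / (2 * ln Q + 1)" using r0 Q by (simp add: add_nonneg_pos)
    then have e1: "0 < e1" using Q unfolding e1_def by simp
    have "eventually (\<lambda>\<epsilon>. ereal \<epsilon> * elog (P m \<epsilon>) \<le> ereal (- r / 2)) (at_right (0::real))"
      unfolding eventually_at_right_field
    proof (intro exI[of _ e1] conjI allI impI)
      show "0 < e1" by (rule e1)
      fix \<epsilon> :: real assume "0 < \<epsilon>" "\<epsilon> < e1"
      then have "\<epsilon> < e0" "\<epsilon> < r / (2 * ln Q + 1)" unfolding e1_def by auto
      then show "ereal \<epsilon> * elog (P m \<epsilon>) \<le> ereal (- r / 2)"
        using b \<open>0 < \<epsilon>\<close> by (intro eps_elog_bound[OF Q(1) r0]) auto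
    qed
    then show ?thesis by (rule Limsup_bounded)
  qed
  have "eventually (\<lambda>m. Limsup (at_right (0::real)) (\<lambda>\<epsilon>. ereal \<epsilon> * elog (P m \<epsilon>)) \<le> ereal (- r / 2)) at_top"
    by (rule eventually_at_top_linorderI[of m0]) (rule inner)
  then have "Limsup at_top (\<lambda>m. Limsup (at_right (0::real)) (\<lambda>\<epsilon>. ereal \<epsilon> * elog (P m \<epsilon>))) \<le> ereal (- r / 2)"
    by (rule Limsup_bounded)
  also have "\<dots> \<le> ereal B" unfolding r_def by simp
  finally show "Limsup at_top (\<lambda>m. Limsup (at_right (0::real)) (\<lambda>\<epsilon>. ereal \<epsilon> * elog (P m \<epsilon>))) \<le> ereal B" .
qed


lemma rect_sets: "{0..L} \<times> {a<..b} \<in> sets (lborel :: (real \<times> real) measure)"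
proof -
  have "{0..L} \<times> {a<..b} \<in> sets (lborel \<Otimes>\<^sub>M (lborel :: real measure))"
    by (rule pair_measureI) auto
  then show ?thesis unfolding lborel_prod .
qed

lemma rect_emeasure:
  assumes "0 \<le> L" "a \<le> b"
  shows "emeasure (lborel :: (real \<times> real) measure) ({0..L} \<times> {a<..b}) = ennreal (L * (b - a))"
proof -
  have "emeasure (lborel :: (real \<times> real) measure) ({0..L} \<times> {a<..b})
      = emeasure (lborel \<Otimes>\<^sub>M lborel) ({0..L} \<times> {a<..b})"
    by (simp add: lborel_prod)
  also have "\<dots> = emeasure lborel {0..L} * emeasure lborel {a<..b}"
  proof -
    show ?thesis by (rule lborel.emeasure_pair_measure_Times) auto
  qed
  also have "\<dots> = ennreal L * ennreal (b - a)" using assms by simp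
  also have "\<dots> = ennreal (L * (b - a))" using assms by (simp add: ennreal_mult)
  finally show ?thesis .
qed

lemma rect_measure:
  assumes "0 \<le> L" "a \<le> b"
  shows "measure (lborel :: (real \<times> real) measure) ({0..L} \<times> {a<..b}) = L * (b - a)"
  using rect_emeasure[OF assms] assms by (simp add: measure_def)

lemma poisson_exp_bound:
  fixes mu r :: real and k :: nat
  assumes mu: "0 \<le> mu" and r: "0 \<le> r" and le: "exp 1 * mu \<le> exp (- r) * real k"
  shows "mu ^ k / fact k \<le> exp (- r * real k)"
proof -
  have "mu \<le> exp (- r - 1) * real k" using le by (simp add: exp_diff field_simps exp_minus)
  then have "mu ^ k \<le> (exp (- r - 1) * real k) ^ k" using mu by (intro power_mono) auto
  then have "mu ^ k / fact k \<le> (exp (- r - 1) * real k) ^ k / fact k"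
    by (intro divide_right_mono) auto
  also have "\<dots> = exp (- r - 1) ^ k * (real k ^ k / fact k)" by (simp add: power_mult_distrib)
  also have "\<dots> \<le> exp (- r - 1) ^ k * exp (real k)"
    by (intro mult_left_mono pow_div_fact_le_exp) auto
  also have "\<dots> = exp (- r * real k)"
    by (simp add: exp_of_nat_mult[symmetric] exp_add[symmetric] algebra_simps)
  finally show ?thesis .
qed

lemma poisson_rect_bound:
  assumes PRM: "poisson_random_measure M Pts"
    and L: "0 \<le> L" and ab: "0 \<le> a" "a \<le> b" and r: "0 \<le> r"
    and le: "exp 1 * (L * (b - a)) \<le> exp (- r) * real k"
  shows "{\<omega>\<in>space M. k \<le> card (Pts \<omega> \<inter> ({0..L} \<times> {a<..b}))} \<in> sets M"
    and "measure M {\<omega>\<in>space M. k \<le> card (Pts \<omega> \<inter> ({0..L} \<times> {a<..b}))} \<le> exp (- r * real k)"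
proof -
  have A: "{0..L} \<times> {a<..b} \<in> sets lborel" "{0..L} \<times> {a<..b} \<subseteq> {0..} \<times> {0..}"
    "emeasure lborel ({0..L} \<times> {a<..b}) < \<infinity>"
    using ab L rect_sets by (auto simp: rect_emeasure)
  show "{\<omega>\<in>space M. k \<le> card (Pts \<omega> \<inter> ({0..L} \<times> {a<..b}))} \<in> sets M"
    by (rule poisson_tail(1)[OF PRM A])
  have "measure M {\<omega>\<in>space M. k \<le> card (Pts \<omega> \<inter> ({0..L} \<times> {a<..b}))}
      \<le> measure lborel ({0..L} \<times> {a<..b}) ^ k / fact k"
    by (rule poisson_tail(2)[OF PRM A])
  also have "\<dots> \<le> exp (- r * real k)" unfolding rect_measure[OF L ab(2)]
    using L ab r le by (intro poisson_exp_bound) auto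
  finally show "measure M {\<omega>\<in>space M. k \<le> card (Pts \<omega> \<inter> ({0..L} \<times> {a<..b}))} \<le> exp (- r * real k)" .
qed

lemma poisson_rect_finite:
  assumes PRM: "poisson_random_measure M Pts"
    and L: "0 \<le> L" and ab: "0 \<le> a" "a \<le> b"
  shows "AE \<omega> in M. finite (Pts \<omega> \<inter> ({0..L} \<times> {a<..b}))"
proof -
  have A: "{0..L} \<times> {a<..b} \<in> sets lborel" "{0..L} \<times> {a<..b} \<subseteq> {0..} \<times> {0..}"
    "emeasure lborel ({0..L} \<times> {a<..b}) < \<infinity>"
    using ab L rect_sets by (auto simp: rect_emeasure)
  then show ?thesis using PRM unfolding poisson_random_measure_def by blast
qed


lemma kb_ge: "0 \<le> x \<Longrightarrow> x \<le> real (nat \<lfloor>x\<rfloor> + 1)"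
  by (simp add: of_nat_nat) linarith

lemma kw_ge: "x \<le> real (nat \<lceil>x\<rceil>)"
  by (cases "0 \<le> x") (auto simp: of_nat_nat)

lemma box_cond:
  fixes A a H T \<epsilon> \<rho> :: real and j n :: nat
  assumes A: "0 \<le> A" and a: "0 \<le> a" and H: "0 \<le> H" and T: "0 < T" and eps: "0 < \<epsilon>" and n: "0 < n"
    and nchoice: "exp 1 * ((A + 2 * a * H) * T / real n) \<le> exp (- \<rho>)"
  shows "exp 1 * ((A + a * H * (2 ^ Suc j - 1)) / \<epsilon> * (real (Suc j) * T / real n - real j * T / real n))
     \<le> exp (- \<rho>) * real (nat \<lfloor>2 ^ j / \<epsilon>\<rfloor> + 1)"
proof -
  have d: "real (Suc j) * T / real n - real j * T / real n = T / real n"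
    by (simp add: diff_divide_distrib[symmetric] algebra_simps)
  have p1: "(1::real) \<le> 2 ^ j" by simp
  have k1: "A + a * H * (2 ^ Suc j - 1) \<le> (A + 2 * a * H) * 2 ^ j"
  proof -
    have "A \<le> A * 2 ^ j" using A p1 by (simp add: mult_le_cancel_left1)
    moreover have "a * H * (2 ^ Suc j - 1) \<le> a * H * (2 * 2 ^ j)"
      using a H by (intro mult_left_mono) auto
    moreover have "a * H * (2 * 2 ^ j) = 2 * a * H * 2 ^ j" by simp
    ultimately show ?thesis by (simp add: algebra_simps)
  qed
  have "exp 1 * ((A + a * H * (2 ^ Suc j - 1)) / \<epsilon> * (T / real n))
      \<le> exp 1 * ((A + 2 * a * H) * 2 ^ j / \<epsilon> * (T / real n))"
    using k1 eps T n by (intro mult_left_mono mult_right_mono divide_right_mono) auto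
  also have "\<dots> = (exp 1 * ((A + 2 * a * H) * T / real n)) * (2 ^ j / \<epsilon>)"
    by (simp add: field_simps)
  also have "\<dots> \<le> exp (- \<rho>) * (2 ^ j / \<epsilon>)"
    using nchoice eps by (intro mult_right_mono) auto
  also have "\<dots> \<le> exp (- \<rho>) * real (nat \<lfloor>2 ^ j / \<epsilon>\<rfloor> + 1)"
    using eps by (intro mult_left_mono kb_ge) auto
  finally show ?thesis unfolding d .
qed

lemma win_cond:
  fixes K \<delta> m \<epsilon> \<rho> :: real and i :: nat
  assumes K: "0 \<le> K" and eps: "0 < \<epsilon>" and m: "0 < m"
    and mchoice: "exp 1 * (4 * K) \<le> exp (- \<rho>) * \<delta> * m"
  shows "exp 1 * (K / \<epsilon> * ((real i + 2) / m - real i / m)) \<le> exp (- \<rho>) * real (nat \<lceil>\<delta> / (2 * \<epsilon>)\<rceil>)"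
proof -
  have d: "(real i + 2) / m - real i / m = 2 / m" by (simp add: diff_divide_distrib[symmetric])
  have "exp 1 * (K / \<epsilon> * (2 / m)) = (exp 1 * (4 * K)) / (2 * \<epsilon> * m)"
    using eps m by (simp add: field_simps)
  also have "\<dots> \<le> (exp (- \<rho>) * \<delta> * m) / (2 * \<epsilon> * m)"
    using mchoice eps m by (intro divide_right_mono) auto
  also have "\<dots> = exp (- \<rho>) * (\<delta> / (2 * \<epsilon>))" using m by (simp add: field_simps)
  also have "\<dots> \<le> exp (- \<rho>) * real (nat \<lceil>\<delta> / (2 * \<epsilon>)\<rceil>)"
    by (intro mult_left_mono kw_ge) auto
  finally show ?thesis unfolding d .
qed

lemma exp_k_bound:
  fixes \<rho> c x :: real
  assumes "0 \<le> \<rho>" "c \<le> x"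
  shows "exp (- \<rho> * x) \<le> exp (- (\<rho> * c))"
  using assms by (simp add: mult_left_mono)


lemma pathwise_main:
  fixes F :: "real \<Rightarrow> nat" and P :: "(real \<times> real) set" and \<phi> h g :: "real \<Rightarrow> real"
    and \<epsilon> T \<alpha> H \<delta> m :: real and n :: nat and tt lam :: "nat \<Rightarrow> real" and Lw :: real
  assumes g_def: "\<And>s. g s = (1/\<epsilon>) * \<phi> (LINT u:{0<..<s}|interval_measure (\<lambda>v. real (F v)). \<epsilon> * h (s - u))"
    and eq: "\<And>t. F t = card (Sset P g t)"
    and quad: "P \<subseteq> {0..} \<times> {0..}"
    and fin0: "\<forall>k::nat. finite (P \<inter> ({0..(1/\<epsilon>) * \<phi> 0} \<times> {0<..real k}))"
    and eps: "0 < \<epsilon>" and lip: "\<alpha>-lipschitz_on UNIV \<phi>"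
    and hb: "\<And>x. 0 \<le> x \<Longrightarrow> x \<le> T \<Longrightarrow> \<bar>h x\<bar> \<le> H" and H0: "0 \<le> H"
    and T: "0 < T" and n: "0 < n" and m: "0 < m"
    and tt_def: "\<And>j. tt j = real j * T / real n"
    and lam_def: "\<And>j. lam j = (\<phi> 0 + \<alpha> * H * (2 ^ Suc j - 1)) / \<epsilon>"
    and Lw_def: "Lw = (\<phi> 0 + \<alpha> * H * (2 ^ n - 1)) / \<epsilon>"
    and boxes: "\<And>j. j < n \<Longrightarrow> finite (P \<inter> ({0..lam j} \<times> {tt j<..tt (Suc j)})) \<and>
                  real (card (P \<inter> ({0..lam j} \<times> {tt j<..tt (Suc j)}))) \<le> 2 ^ j / \<epsilon>"
    and wins: "\<And>i::nat. i \<le> nat \<lfloor>m * T\<rfloor> \<Longrightarrow> finite (P \<inter> ({0..Lw} \<times> {real i / m<..(real i + 2) / m})) \<and>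
                  real (card (P \<inter> ({0..Lw} \<times> {real i / m<..(real i + 2) / m}))) < \<delta> / (2 * \<epsilon>)"
  shows "mono F"
    and "\<And>s t. 0 \<le> s \<Longrightarrow> s \<le> t \<Longrightarrow> t \<le> T \<Longrightarrow> t - s \<le> 1 / m \<Longrightarrow> \<epsilon> * real (F t) - \<epsilon> * real (F s) < \<delta> / 2"
proof -
  note ps = path_struct[OF g_def eq quad fin0]
  show mono: "mono F" by (rule ps(1))
  have fin: "\<And>t. finite (Sset P g t)" by (rule ps(2))
  have neg: "\<And>t. t \<le> 0 \<Longrightarrow> F t = 0" by (rule ps(3))
  have rc: "\<And>a. continuous (at_right a) (\<lambda>v. real (F v))" by (rule right_cont_F[OF mono eq fin])
  have ib: "g s \<le> (\<phi> 0 + \<alpha> * \<epsilon> * H * c) / \<epsilon>"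
    if "0 < s" "s \<le> T" "\<And>v. v < s \<Longrightarrow> real (F v) \<le> c" for s c
    by (rule intensity_bound[OF g_def eps mono rc lip hb H0 that]) auto
  have lev: "\<forall>v \<le> tt j. real (F v) \<le> (2 ^ j - 1) / \<epsilon>" if "j \<le> n" for j
    using that
  proof (induction j)
    case 0
    then show ?case using neg by (simp add: tt_def)
  next
    case (Suc j)
    then have jn: "j < n" by simp
    have IH: "\<forall>v \<le> tt j. real (F v) \<le> (2 ^ j - 1) / \<epsilon>" using Suc by simp
    have ab: "tt j \<le> tt (Suc j)" unfolding tt_def using T by (simp add: divide_right_mono)
    have tT: "tt (Suc j) \<le> T"
    proof -
      have "real (Suc j) \<le> real n" using jn by simp
      then have "real (Suc j) * T / real n \<le> real n * T / real n" using T
        by (intro divide_right_mono mult_right_mono) auto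
      then show ?thesis unfolding tt_def using n by simp
    qed
    have tt0: "0 \<le> tt j" unfolding tt_def using T by simp
    have "\<And>v. v \<le> tt (Suc j) \<Longrightarrow> real (F v) \<le> (2 ^ Suc j - 1) / \<epsilon>"
    proof (rule step_level[OF mono eq fin ab _ _ quad])
      show "real (F (tt j)) \<le> (2 ^ j - 1) / \<epsilon>" using IH by simp
      show "finite (P \<inter> ({0..lam j} \<times> {tt j<..tt (Suc j)}))" using boxes[OF jn] by simp
      fix s assume s: "tt j < s" "s \<le> tt (Suc j)" and c: "\<And>v. v < s \<Longrightarrow> real (F v) \<le> (2 ^ Suc j - 1) / \<epsilon>"
      have "g s \<le> (\<phi> 0 + \<alpha> * \<epsilon> * H * ((2 ^ Suc j - 1) / \<epsilon>)) / \<epsilon>"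
        using s tt0 tT by (intro ib c) auto
      also have "\<dots> = lam j" unfolding lam_def using eps by simp
      finally show "g s \<le> lam j" .
    next
      have "real (card (P \<inter> ({0..lam j} \<times> {tt j<..tt (Suc j)}))) \<le> 2 ^ j / \<epsilon>" using boxes[OF jn] by simp
      moreover have "(2 ^ j - 1) / \<epsilon> + 2 ^ j / \<epsilon> = ((2::real) ^ Suc j - 1) / \<epsilon>"
        by (simp add: add_divide_distrib[symmetric])
      ultimately show "(2 ^ j - 1) / \<epsilon> + real (card (P \<inter> ({0..lam j} \<times> {tt j<..tt (Suc j)}))) \<le> (2 ^ Suc j - 1) / \<epsilon>"
        by linarith
    qed
    then show ?case by blast
  qed
  have ttn: "tt n = T" unfolding tt_def using n by simp
  have FT: "real (F v) \<le> (2 ^ n - 1) / \<epsilon>" if "v \<le> T" for v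
    using lev[of n] that ttn by simp
  fix s t assume st: "0 \<le> s" "s \<le> t" "t \<le> T" "t - s \<le> 1 / m"
  define i where "i = nat \<lfloor>m * s\<rfloor>"
  have ms0: "0 \<le> m * s" using m st by simp
  have ii: "real i \<le> m * s" "m * s < real i + 1" unfolding i_def using ms0
    by (auto simp: of_nat_nat)
  have iT: "i \<le> nat \<lfloor>m * T\<rfloor>" unfolding i_def using st m
    by (intro nat_mono floor_mono mult_left_mono) auto
  have lo: "real i / m \<le> s" using ii m by (simp add: divide_le_eq mult.commute)
  have hi: "t \<le> (real i + 2) / m"
  proof -
    have "t \<le> s + 1 / m" using st by simp
    also have "\<dots> = (m * s + 1) / m" using m by (simp add: field_simps)
    also have "\<dots> \<le> (real i + 2) / m" using ii m by (intro divide_right_mono) auto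
    finally show ?thesis .
  qed
  have sub: "P \<inter> ({0..Lw} \<times> {s<..t}) \<subseteq> P \<inter> ({0..Lw} \<times> {real i / m<..(real i + 2) / m})"
    using lo hi by auto
  note w = wins[OF iT]
  have finR: "finite (P \<inter> ({0..Lw} \<times> {s<..t}))" using finite_subset[OF sub] w by blast
  have "F t \<le> F s + card (P \<inter> ({0..Lw} \<times> {s<..t}))"
  proof (rule count_bound[OF eq fin st(2) _ quad finR])
    fix \<sigma> assume \<sigma>: "s < \<sigma>" "\<sigma> \<le> t"
    have "g \<sigma> \<le> (\<phi> 0 + \<alpha> * \<epsilon> * H * ((2 ^ n - 1) / \<epsilon>)) / \<epsilon>"
      using \<sigma> st FT by (intro ib) auto
    also have "\<dots> = Lw" unfolding Lw_def using eps by simp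
    finally show "g \<sigma> \<le> Lw" .
  qed
  also have "\<dots> \<le> F s + card (P \<inter> ({0..Lw} \<times> {real i / m<..(real i + 2) / m}))"
    using card_mono[OF _ sub] w by simp
  finally have "real (F t) \<le> real (F s) + real (card (P \<inter> ({0..Lw} \<times> {real i / m<..(real i + 2) / m})))"
    by (metis of_nat_add of_nat_le_iff)
  then have "real (F t) - real (F s) < \<delta> / (2 * \<epsilon>)" using w by linarith
  then have "\<epsilon> * (real (F t) - real (F s)) < \<epsilon> * (\<delta> / (2 * \<epsilon>))" using eps by (intro mult_strict_left_mono)
  then show "\<epsilon> * real (F t) - \<epsilon> * real (F s) < \<delta> / 2" using eps by (simp add: right_diff_distrib)
qed


lemma prob_bound:
  fixes M :: "'w measure" and Pts :: "'w \<Rightarrow> (real \<times> real) set"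
    and \<phi> h :: "real \<Rightarrow> real" and T \<alpha> \<delta> \<epsilon> m \<rho> H :: real and n :: nat
    and Nf :: "'w \<Rightarrow> real \<Rightarrow> nat"
  assumes PRM: "poisson_random_measure M Pts"
    and T_pos: "0 < T"
    and phi0: "0 \<le> \<phi> 0"
    and alpha_pos: "0 < \<alpha>"
    and phi_lip: "\<alpha>-lipschitz_on UNIV \<phi>"
    and hb: "\<And>x. 0 \<le> x \<Longrightarrow> x \<le> T \<Longrightarrow> \<bar>h x\<bar> \<le> H" and H0: "0 \<le> H"
    and sol: "hawkes_solution M Pts \<phi> h \<epsilon> Nf"
    and delta_pos: "0 < \<delta>" and eps: "0 < \<epsilon>" and m: "0 < m" and n: "0 < n" and rho: "0 \<le> \<rho>"
    and nchoice: "exp 1 * ((\<phi> 0 + 2 * \<alpha> * H) * T / real n) \<le> exp (- \<rho>)"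
    and mchoice: "exp 1 * (4 * (\<phi> 0 + \<alpha> * H * (2 ^ n - 1))) \<le> exp (- \<rho>) * \<delta> * m"
  shows "measure M {\<omega> \<in> space M.
              (SUP (s, t) \<in> {(s, t). 0 \<le> s \<and> s \<le> t \<and> t \<le> T \<and> \<bar>t - s\<bar> \<le> 1 / m}.
                 ereal \<bar>\<epsilon> * real (Nf \<omega> t) - \<epsilon> * real (Nf \<omega> s)\<bar>) \<ge> ereal \<delta>}
         \<le> (real n + real (nat \<lfloor>m * T\<rfloor> + 1)) * exp (- (\<rho> * min 1 (\<delta> / 2)) / \<epsilon>)"
proof -
  interpret prob_space M using PRM unfolding poisson_random_measure_def by blast
  have quad: "\<And>\<omega>. \<omega> \<in> space M \<Longrightarrow> Pts \<omega> \<subseteq> {0..} \<times> {0..}"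
    using PRM unfolding poisson_random_measure_def by blast
  define c0 where "c0 = min 1 (\<delta> / 2)"
  have c0: "0 < c0" "c0 \<le> 1" "c0 \<le> \<delta> / 2" using delta_pos unfolding c0_def by auto
  define tt where "tt j = real j * T / real n" for j
  define lam where "lam j = (\<phi> 0 + \<alpha> * H * (2 ^ Suc j - 1)) / \<epsilon>" for j
  define Lw where "Lw = (\<phi> 0 + \<alpha> * H * (2 ^ n - 1)) / \<epsilon>"
  define kb where "kb j = nat \<lfloor>2 ^ j / \<epsilon>\<rfloor> + 1" for j :: nat
  define kw where "kw = nat \<lceil>\<delta> / (2 * \<epsilon>)\<rceil>"
  define Box where "Box j = {0..lam j} \<times> {tt j<..tt (Suc j)}" for j
  define Win where "Win i = {0..Lw} \<times> {real i / m<..(real i + 2) / m}" for i :: nat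
  define B where "B j = {\<omega> \<in> space M. kb j \<le> card (Pts \<omega> \<inter> Box j)}" for j
  define W where "W i = {\<omega> \<in> space M. kw \<le> card (Pts \<omega> \<inter> Win i)}" for i
  define I where "I = nat \<lfloor>m * T\<rfloor>"
  define E where "E = {\<omega> \<in> space M.
              (SUP (s, t) \<in> {(s, t). 0 \<le> s \<and> s \<le> t \<and> t \<le> T \<and> \<bar>t - s\<bar> \<le> 1 / m}.
                 ereal \<bar>\<epsilon> * real (Nf \<omega> t) - \<epsilon> * real (Nf \<omega> s)\<bar>) \<ge> ereal \<delta>}"
  have tt0: "0 \<le> tt j" for j unfolding tt_def using T_pos by simp
  have ttS: "tt j \<le> tt (Suc j)" for j unfolding tt_def using T_pos by (simp add: divide_right_mono)
  have pow1: "(1::real) \<le> 2 ^ j" for j :: nat by simp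
  have lam0: "0 \<le> lam j" for j unfolding lam_def using phi0 alpha_pos H0 eps pow1[of "Suc j"] by simp
  have Lw0: "0 \<le> Lw" unfolding Lw_def using phi0 alpha_pos H0 eps pow1[of n] by simp
  have Bm: "B j \<in> sets M" and Bp: "prob (B j) \<le> exp (- (\<rho> * c0) / \<epsilon>)" for j
  proof -
    have cond: "exp 1 * (lam j * (tt (Suc j) - tt j)) \<le> exp (- \<rho>) * real (kb j)"
      unfolding lam_def tt_def kb_def
      using box_cond[OF phi0 less_imp_le[OF alpha_pos] H0 T_pos eps n nchoice] .
    show "B j \<in> sets M" unfolding B_def Box_def
      by (rule poisson_rect_bound(1)[OF PRM lam0 tt0 ttS rho cond])
    have "prob (B j) \<le> exp (- \<rho> * real (kb j))" unfolding B_def Box_def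
      by (rule poisson_rect_bound(2)[OF PRM lam0 tt0 ttS rho cond])
    also have "\<dots> \<le> exp (- (\<rho> * (c0 / \<epsilon>)))"
    proof (rule exp_k_bound[OF rho])
      have "c0 / \<epsilon> \<le> 1 / \<epsilon>" using c0 eps by (simp add: divide_right_mono)
      also have "\<dots> \<le> 2 ^ j / \<epsilon>" using eps by (simp add: divide_right_mono)
      also have "\<dots> \<le> real (kb j)" unfolding kb_def using eps by (intro kb_ge) auto
      finally show "c0 / \<epsilon> \<le> real (kb j)" .
    qed
    also have "\<dots> = exp (- (\<rho> * c0) / \<epsilon>)" by simp
    finally show "prob (B j) \<le> exp (- (\<rho> * c0) / \<epsilon>)" .
  qed
  have Wm: "W i \<in> sets M" and Wp: "prob (W i) \<le> exp (- (\<rho> * c0) / \<epsilon>)" for i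
  proof -
    have i0: "0 \<le> real i / m" using m by simp
    have i1: "real i / m \<le> (real i + 2) / m" using m by (simp add: divide_right_mono)
    have K0: "0 \<le> \<phi> 0 + \<alpha> * H * (2 ^ n - 1)" using Lw0 eps unfolding Lw_def
      by (simp add: zero_le_divide_iff)
    have cond: "exp 1 * (Lw * ((real i + 2) / m - real i / m)) \<le> exp (- \<rho>) * real kw"
      unfolding Lw_def kw_def by (rule win_cond[OF K0 eps m mchoice])
    show "W i \<in> sets M" unfolding W_def Win_def
      by (rule poisson_rect_bound(1)[OF PRM Lw0 i0 i1 rho cond])
    have "prob (W i) \<le> exp (- \<rho> * real kw)" unfolding W_def Win_def
      by (rule poisson_rect_bound(2)[OF PRM Lw0 i0 i1 rho cond])
    also have "\<dots> \<le> exp (- (\<rho> * (c0 / \<epsilon>)))"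
    proof (rule exp_k_bound[OF rho])
      have "c0 / \<epsilon> \<le> (\<delta> / 2) / \<epsilon>" using divide_right_mono[OF c0(3), of \<epsilon>] eps by linarith
      also have "\<dots> = \<delta> / (2 * \<epsilon>)" by simp
      also have "\<dots> \<le> real kw" unfolding kw_def by (rule kw_ge)
      finally show "c0 / \<epsilon> \<le> real kw" .
    qed
    also have "\<dots> = exp (- (\<rho> * c0) / \<epsilon>)" by simp
    finally show "prob (W i) \<le> exp (- (\<rho> * c0) / \<epsilon>)" .
  qed
  define good where "good \<omega> \<longleftrightarrow>
      (\<forall>t. Nf \<omega> t = card {(z, s). (z, s) \<in> Pts \<omega> \<and> 0 < s \<and> s \<le> t \<and>
          z \<le> (1 / \<epsilon>) * \<phi> (LINT u:{0<..<s}|interval_measure (\<lambda>v. real (Nf \<omega> v)). \<epsilon> * h (s - u))}) \<and>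
      (\<forall>k::nat. finite (Pts \<omega> \<inter> ({0..(1/\<epsilon>) * \<phi> 0} \<times> {0<..real k}))) \<and>
      (\<forall>j. finite (Pts \<omega> \<inter> Box j)) \<and> (\<forall>i. finite (Pts \<omega> \<inter> Win i))" for \<omega>
  have AEgood: "AE \<omega> in M. good \<omega>"
  proof -
    have a1: "AE \<omega> in M. \<forall>t. Nf \<omega> t = card {(z, s). (z, s) \<in> Pts \<omega> \<and> 0 < s \<and> s \<le> t \<and>
          z \<le> (1 / \<epsilon>) * \<phi> (LINT u:{0<..<s}|interval_measure (\<lambda>v. real (Nf \<omega> v)). \<epsilon> * h (s - u))}"
      using sol unfolding hawkes_solution_def .
    have a2: "AE \<omega> in M. \<forall>k::nat. finite (Pts \<omega> \<inter> ({0..(1/\<epsilon>) * \<phi> 0} \<times> {0<..real k}))"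
      unfolding AE_all_countable using phi0 eps by (intro allI poisson_rect_finite[OF PRM]) auto
    have a3: "AE \<omega> in M. \<forall>j. finite (Pts \<omega> \<inter> Box j)"
      unfolding AE_all_countable Box_def by (intro allI poisson_rect_finite[OF PRM lam0 tt0 ttS])
    have a4: "AE \<omega> in M. \<forall>i. finite (Pts \<omega> \<inter> Win i)"
      unfolding AE_all_countable Win_def using m Lw0
      by (intro allI poisson_rect_finite[OF PRM]) (auto simp: divide_right_mono)
    show ?thesis using a1 a2 a3 a4 unfolding good_def by eventually_elim blast
  qed
  obtain Nul where Nul: "{\<omega> \<in> space M. \<not> good \<omega>} \<subseteq> Nul" "emeasure M Nul = 0" "Nul \<in> sets M"
    using AE_E[OF AEgood] by blast
  have incl: "E \<subseteq> Nul \<union> (\<Union>j\<in>{..<n}. B j) \<union> (\<Union>i\<in>{..I}. W i)"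
  proof
    fix \<omega> assume \<omega>E: "\<omega> \<in> E"
    show "\<omega> \<in> Nul \<union> (\<Union>j\<in>{..<n}. B j) \<union> (\<Union>i\<in>{..I}. W i)"
    proof (rule ccontr)
      assume nin: "\<omega> \<notin> Nul \<union> (\<Union>j\<in>{..<n}. B j) \<union> (\<Union>i\<in>{..I}. W i)"
      have \<omega>s: "\<omega> \<in> space M" using \<omega>E unfolding E_def by simp
      have gd: "good \<omega>" using Nul(1) nin \<omega>s by blast
      define g where "g s = (1/\<epsilon>) * \<phi> (LINT u:{0<..<s}|interval_measure (\<lambda>v. real (Nf \<omega> v)). \<epsilon> * h (s - u))" for s
      have eq: "Nf \<omega> t = card (Sset (Pts \<omega>) g t)" for t
        using gd unfolding good_def Sset_def g_def by blast
      have boxes: "finite (Pts \<omega> \<inter> ({0..lam j} \<times> {tt j<..tt (Suc j)})) \<and>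
                  real (card (Pts \<omega> \<inter> ({0..lam j} \<times> {tt j<..tt (Suc j)}))) \<le> 2 ^ j / \<epsilon>"
        if "j < n" for j
      proof
        show "finite (Pts \<omega> \<inter> ({0..lam j} \<times> {tt j<..tt (Suc j)}))"
          using gd unfolding good_def Box_def by blast
        have "\<omega> \<notin> B j" using nin that by blast
        then have "card (Pts \<omega> \<inter> Box j) < kb j" using \<omega>s unfolding B_def by simp
        then have "card (Pts \<omega> \<inter> Box j) \<le> nat \<lfloor>2 ^ j / \<epsilon>\<rfloor>" unfolding kb_def by simp
        then have "real (card (Pts \<omega> \<inter> Box j)) \<le> real (nat \<lfloor>2 ^ j / \<epsilon>\<rfloor>)" by simp
        also have "\<dots> \<le> 2 ^ j / \<epsilon>" using eps by (simp add: of_nat_nat)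
        finally show "real (card (Pts \<omega> \<inter> ({0..lam j} \<times> {tt j<..tt (Suc j)}))) \<le> 2 ^ j / \<epsilon>"
          unfolding Box_def .
      qed
      have wins: "finite (Pts \<omega> \<inter> ({0..Lw} \<times> {real i / m<..(real i + 2) / m})) \<and>
                  real (card (Pts \<omega> \<inter> ({0..Lw} \<times> {real i / m<..(real i + 2) / m}))) < \<delta> / (2 * \<epsilon>)"
        if "i \<le> nat \<lfloor>m * T\<rfloor>" for i
      proof
        show "finite (Pts \<omega> \<inter> ({0..Lw} \<times> {real i / m<..(real i + 2) / m}))"
          using gd unfolding good_def Win_def by blast
        have "\<omega> \<notin> W i" using nin that unfolding I_def by blast
        then have "card (Pts \<omega> \<inter> Win i) < kw" using \<omega>s unfolding W_def by simp
        then have "real (card (Pts \<omega> \<inter> Win i)) + 1 \<le> real (nat \<lceil>\<delta> / (2 * \<epsilon>)\<rceil>)"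
          unfolding kw_def by linarith
        also have "\<dots> < \<delta> / (2 * \<epsilon>) + 1" using delta_pos eps by (simp add: of_nat_nat) linarith
        finally show "real (card (Pts \<omega> \<inter> ({0..Lw} \<times> {real i / m<..(real i + 2) / m}))) < \<delta> / (2 * \<epsilon>)"
          unfolding Win_def by simp
      qed
      have fin0: "\<forall>k::nat. finite (Pts \<omega> \<inter> ({0..(1/\<epsilon>) * \<phi> 0} \<times> {0<..real k}))"
        using gd unfolding good_def by blast
      note pm = pathwise_main[OF g_def eq quad[OF \<omega>s] fin0 eps phi_lip hb H0 T_pos n m tt_def lam_def Lw_def boxes wins]
      have le: "(SUP (s, t) \<in> {(s, t). 0 \<le> s \<and> s \<le> t \<and> t \<le> T \<and> \<bar>t - s\<bar> \<le> 1 / m}.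
                 ereal \<bar>\<epsilon> * real (Nf \<omega> t) - \<epsilon> * real (Nf \<omega> s)\<bar>) \<le> ereal (\<delta> / 2)"
      proof (rule SUP_least, clarify)
        fix s t :: real assume st: "0 \<le> s" "s \<le> t" "t \<le> T" "\<bar>t - s\<bar> \<le> 1 / m"
        have "Nf \<omega> s \<le> Nf \<omega> t" using pm(1) st(2) by (simp add: mono_def)
        then have "0 \<le> \<epsilon> * real (Nf \<omega> t) - \<epsilon> * real (Nf \<omega> s)" using eps
          by (simp add: right_diff_distrib[symmetric])
        moreover have "\<epsilon> * real (Nf \<omega> t) - \<epsilon> * real (Nf \<omega> s) < \<delta> / 2"
          using st by (intro pm(2)) auto
        ultimately show "ereal \<bar>\<epsilon> * real (Nf \<omega> t) - \<epsilon> * real (Nf \<omega> s)\<bar> \<le> ereal (\<delta> / 2)"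
          by simp
      qed
      have "ereal \<delta> \<le> ereal (\<delta> / 2)" using \<omega>E le unfolding E_def by (blast intro: order_trans)
      then show False using delta_pos by simp
    qed
  qed
  have Um: "Nul \<union> (\<Union>j\<in>{..<n}. B j) \<union> (\<Union>i\<in>{..I}. W i) \<in> sets M"
    using Nul Bm Wm by auto
  have "prob E \<le> prob (Nul \<union> (\<Union>j\<in>{..<n}. B j) \<union> (\<Union>i\<in>{..I}. W i))"
  proof (cases "E \<in> sets M")
    case True then show ?thesis using incl Um by (intro finite_measure_mono) auto
  next
    case False then show ?thesis by (simp add: measure_notin_sets)
  qed
  also have "\<dots> \<le> (\<Sum>j\<in>{..<n}. prob (B j)) + (\<Sum>i\<in>{..I}. prob (W i))"
  proof -
    have UBm: "(\<Union>j\<in>{..<n}. B j) \<in> sets M" using Bm by auto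
    have UWm: "(\<Union>i\<in>{..I}. W i) \<in> sets M" using Wm by auto
    have "prob (Nul \<union> (\<Union>j\<in>{..<n}. B j) \<union> (\<Union>i\<in>{..I}. W i))
        \<le> prob (Nul \<union> (\<Union>j\<in>{..<n}. B j)) + prob (\<Union>i\<in>{..I}. W i)"
      by (rule measure_subadditive) (use Nul UBm UWm in \<open>auto simp: emeasure_eq_measure\<close>)
    also have "prob (Nul \<union> (\<Union>j\<in>{..<n}. B j)) \<le> prob Nul + prob (\<Union>j\<in>{..<n}. B j)"
      by (rule measure_subadditive) (use Nul UBm in \<open>auto simp: emeasure_eq_measure\<close>)
    also have "prob Nul = 0" using Nul by (simp add: measure_def)
    also have "prob (\<Union>j\<in>{..<n}. B j) \<le> (\<Sum>j\<in>{..<n}. prob (B j))"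
      by (rule finite_measure_subadditive_finite) (use Bm in auto)
    also have "prob (\<Union>i\<in>{..I}. W i) \<le> (\<Sum>i\<in>{..I}. prob (W i))"
      by (rule finite_measure_subadditive_finite) (use Wm in auto)
    finally show ?thesis by simp
  qed
  also have "\<dots> \<le> (\<Sum>j\<in>{..<n}. exp (- (\<rho> * c0) / \<epsilon>)) + (\<Sum>i\<in>{..I}. exp (- (\<rho> * c0) / \<epsilon>))"
    by (intro add_mono sum_mono Bp Wp)
  also have "\<dots> = (real n + real (I + 1)) * exp (- (\<rho> * c0) / \<epsilon>)"
    by (simp add: algebra_simps)
  finally show ?thesis unfolding E_def I_def c0_def .
qed


theorem lemma2p8:
  fixes M :: "'w measure" and Pts :: "'w \<Rightarrow> (real \<times> real) set"
    and \<phi> h :: "real \<Rightarrow> real" and T \<alpha> \<delta> :: real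
    and N :: "real \<Rightarrow> 'w \<Rightarrow> real \<Rightarrow> nat"
  assumes PRM: "poisson_random_measure M Pts"
    and T_pos: "0 < T"
    and phi_nonneg: "\<And>x. 0 \<le> \<phi> x"
    and alpha_pos: "0 < \<alpha>"
    and phi_lip: "\<alpha>-lipschitz_on UNIV \<phi>"
    and h_locint: "\<And>K. 0 \<le> K \<Longrightarrow> set_integrable lborel {0..K} h"
    and h_locbdd: "\<And>K. 0 \<le> K \<Longrightarrow> bounded (h ` {0..K})"
    and h_small: "\<alpha> * (LINT t:{0..T}|lborel. \<bar>h t\<bar>) < 1"
    and sol: "\<And>\<epsilon>. 0 < \<epsilon> \<Longrightarrow> hawkes_solution M Pts \<phi> h \<epsilon> (N \<epsilon>)"
    and delta_pos: "0 < \<delta>"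
  shows "Limsup at_top (\<lambda>m::real. Limsup (at_right (0::real)) (\<lambda>\<epsilon>.
            ereal \<epsilon> * elog (measure M {\<omega> \<in> space M.
              (SUP (s, t) \<in> {(s, t). 0 \<le> s \<and> s \<le> t \<and> t \<le> T \<and> \<bar>t - s\<bar> \<le> 1 / m}.
                 ereal \<bar>\<epsilon> * real (N \<epsilon> \<omega> t) - \<epsilon> * real (N \<epsilon> \<omega> s)\<bar>) \<ge> ereal \<delta>})))
         = -\<infinity>"
proof -
  have key: "\<exists>m0. \<forall>m\<ge>m0. \<exists>Q\<ge>1. \<exists>e0>0. \<forall>\<epsilon>. 0 < \<epsilon> \<and> \<epsilon> < e0 \<longrightarrow>
          measure M {\<omega> \<in> space M.
              (SUP (s, t) \<in> {(s, t). 0 \<le> s \<and> s \<le> t \<and> t \<le> T \<and> \<bar>t - s\<bar> \<le> 1 / m}.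
                 ereal \<bar>\<epsilon> * real (N \<epsilon> \<omega> t) - \<epsilon> * real (N \<epsilon> \<omega> s)\<bar>) \<ge> ereal \<delta>}
          \<le> Q * exp (- r / \<epsilon>)" if r: "0 < r" for r
  proof -
  define c0 where "c0 = min 1 (\<delta> / 2)"
  have c0: "0 < c0" using delta_pos unfolding c0_def by simp
  define \<rho> where "\<rho> = r / c0"
  have rho: "0 \<le> \<rho>" and rhoc: "\<rho> * c0 = r" using r c0 unfolding \<rho>_def by auto
  obtain H0 where H0: "\<forall>x\<in>h ` {0..T}. \<bar>x\<bar> \<le> H0"
    using h_locbdd[of T] T_pos unfolding bounded_real by auto
  define H where "H = max H0 0"
  have H: "0 \<le> H" "\<And>x. 0 \<le> x \<Longrightarrow> x \<le> T \<Longrightarrow> \<bar>h x\<bar> \<le> H"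
    using H0 unfolding H_def by force+
  define A where "A = \<phi> 0"
  have A: "0 \<le> A" unfolding A_def by (rule phi_nonneg)
  define X where "X = exp 1 * (A + 2 * \<alpha> * H) * T"
  have X: "0 \<le> X" unfolding X_def using A H alpha_pos T_pos by simp
  define n where "n = nat \<lceil>X * exp \<rho>\<rceil> + 1"
  have n: "0 < n" unfolding n_def by simp
  have nX: "X * exp \<rho> \<le> real n" unfolding n_def by linarith
  have nchoice: "exp 1 * ((\<phi> 0 + 2 * \<alpha> * H) * T / real n) \<le> exp (- \<rho>)"
  proof -
    have "exp 1 * ((\<phi> 0 + 2 * \<alpha> * H) * T / real n) = X / real n" unfolding X_def A_def by simp
    also have "\<dots> \<le> exp (- \<rho>)" using nX n by (simp add: divide_le_eq exp_minus field_simps)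
    finally show ?thesis .
  qed
  define K where "K = \<phi> 0 + \<alpha> * H * (2 ^ n - 1)"
  define m0 where "m0 = exp 1 * (4 * K) * exp \<rho> / \<delta> + 1"
  have K: "0 \<le> K" unfolding K_def using phi_nonneg[of 0] alpha_pos H by simp
  show ?thesis
  proof (rule exI[of _ m0], intro allI impI)
    fix m assume mm: "m0 \<le> m"
    have m0pos: "1 \<le> m0" unfolding m0_def using K delta_pos by simp
    have m: "0 < m" using mm m0pos by simp
    have mchoice: "exp 1 * (4 * (\<phi> 0 + \<alpha> * H * (2 ^ n - 1))) \<le> exp (- \<rho>) * \<delta> * m"
    proof -
      have "exp 1 * (4 * K) * exp \<rho> / \<delta> \<le> m" using mm unfolding m0_def by simp
      then have "exp 1 * (4 * K) * exp \<rho> \<le> m * \<delta>" using delta_pos by (simp add: divide_le_eq)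
      then have "exp 1 * (4 * K) \<le> exp (- \<rho>) * \<delta> * m"
        by (simp add: exp_minus field_simps)
      then show ?thesis unfolding K_def .
    qed
    show "\<exists>Q\<ge>1. \<exists>e0>0. \<forall>\<epsilon>. 0 < \<epsilon> \<and> \<epsilon> < e0 \<longrightarrow>
          measure M {\<omega> \<in> space M.
              (SUP (s, t) \<in> {(s, t). 0 \<le> s \<and> s \<le> t \<and> t \<le> T \<and> \<bar>t - s\<bar> \<le> 1 / m}.
                 ereal \<bar>\<epsilon> * real (N \<epsilon> \<omega> t) - \<epsilon> * real (N \<epsilon> \<omega> s)\<bar>) \<ge> ereal \<delta>}
          \<le> Q * exp (- r / \<epsilon>)"
    proof (intro exI[of _ "real n + real (nat \<lfloor>m * T\<rfloor> + 1)"] conjI allI impI)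
      show "1 \<le> real n + real (nat \<lfloor>m * T\<rfloor> + 1)" by simp
      show "0 < real n + real (nat \<lfloor>m * T\<rfloor> + 1)" by simp
      fix \<epsilon> :: real assume e: "0 < \<epsilon> \<and> \<epsilon> < real n + real (nat \<lfloor>m * T\<rfloor> + 1)"
      have "measure M {\<omega> \<in> space M.
              (SUP (s, t) \<in> {(s, t). 0 \<le> s \<and> s \<le> t \<and> t \<le> T \<and> \<bar>t - s\<bar> \<le> 1 / m}.
                 ereal \<bar>\<epsilon> * real (N \<epsilon> \<omega> t) - \<epsilon> * real (N \<epsilon> \<omega> s)\<bar>) \<ge> ereal \<delta>}
          \<le> (real n + real (nat \<lfloor>m * T\<rfloor> + 1)) * exp (- (\<rho> * min 1 (\<delta> / 2)) / \<epsilon>)"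
        using e by (intro prob_bound[OF PRM T_pos phi_nonneg[of 0] alpha_pos phi_lip H(2) H(1) sol[of \<epsilon>] delta_pos _ m n rho nchoice mchoice]) auto
      then show "measure M {\<omega> \<in> space M.
              (SUP (s, t) \<in> {(s, t). 0 \<le> s \<and> s \<le> t \<and> t \<le> T \<and> \<bar>t - s\<bar> \<le> 1 / m}.
                 ereal \<bar>\<epsilon> * real (N \<epsilon> \<omega> t) - \<epsilon> * real (N \<epsilon> \<omega> s)\<bar>) \<ge> ereal \<delta>}
          \<le> (real n + real (nat \<lfloor>m * T\<rfloor> + 1)) * exp (- r / \<epsilon>)"
        using rhoc unfolding c0_def by simp
    qed
  qed
  qed
  show ?thesis by (rule final_asymp[OF key])
qed

end
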